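(* Let $m\ge2$ and $K^*>m$ be integers, set $L=K^*-m+1$, and let $\tau^s>1$. For $r\in[0,1]$ let $$f(r)=\frac{K^*!}{L!\,(m-2)!}\,r^{L}(1-r)^{m-2},$$ for $x\ge0$ and integers $l\ge1$ let $G_l(x)=e^{-x}\sum_{n=0}^{l-1}\frac{x^n}{n!}$, and for $c\ge0$ define $$P_d^s(c)=\int_0^{1/\tau^s}f(r)\,dr+\int_{1/\tau^s}^{1}f(r)\Big[1-\frac{1}{(r\tau^s)^{L}}\sum_{l=1}^{L}\binom{L}{l}(r\tau^s-1)^{l}\,G_l\!\big(c/\tau^s\big)\Big]dr .$$ Then $P_d^s$ is a strictly increasing function of $c$ on $[0,\infty)$.
   Context: In the paper, $P_d^s(c)$ is the detection probability of the adaptive detector $z^T\big(\sum_{k^*=-K^*}^{-1}z(k^* )z(k^* )^T\big)^{-1}z\gtrless\tau^s-1$ built from $K^*$ secondary residual samples, $m$ is the residual dimension, and $c=c_i^p(k)=a_i^T(k-1)\Sigma_{z_i^p}^{-1}a_i(k-1)$ is the non-centrality parameter induced by the attack. *)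

theory Defs
  imports "HOL-Analysis.Analysis"
begin

definition dens :: "nat \<Rightarrow> nat \<Rightarrow> real \<Rightarrow> real" where
  "dens m Ks r = fact Ks / (fact (Ks - m + 1) * fact (m - 2)) * r ^ (Ks - m + 1) * (1 - r) ^ (m - 2)"

definition G :: "nat \<Rightarrow> real \<Rightarrow> real" where
  "G l x = exp (- x) * (\<Sum>n<l. x ^ n / fact n)"

definition Pds :: "nat \<Rightarrow> nat \<Rightarrow> real \<Rightarrow> real \<Rightarrow> real" where
  "Pds m Ks tau c =
     (let L = Ks - m + 1 in
      integral {0..1/tau} (dens m Ks)
      + integral {1/tau..1} (\<lambda>r. dens m Ks r *
          (1 - 1 / (r * tau) ^ L *
               (\<Sum>l=1..L. real (L choose l) * (r * tau - 1) ^ l * G l (c / tau)))))"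

end

theory Submission
  imports Defs
begin

lemma S_deriv:
  "((\<lambda>x::real. \<Sum>n<Suc k. x ^ n / fact n) has_real_derivative (\<Sum>n<k. x ^ n / fact n)) (at x)"
proof (induction k)
  case 0
  then show ?case by simp
next
  case (Suc k)
  have d: "((\<lambda>x::real. x ^ Suc k / fact (Suc k)) has_real_derivative (x ^ k / fact k)) (at x)"
  proof -
    have "((\<lambda>x::real. x ^ Suc k) has_real_derivative (real (Suc k) * x ^ k)) (at x)"
      using DERIV_pow[of "Suc k" x] by simp
    then have "((\<lambda>x::real. x ^ Suc k / fact (Suc k)) has_real_derivative (real (Suc k) * x ^ k / fact (Suc k))) (at x)"
      by (rule DERIV_cdivide)
    moreover have "real (Suc k) * x ^ k / fact (Suc k) = x ^ k / fact k"
      by (simp add: fact_Suc del: of_nat_Suc)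
    ultimately show ?thesis by simp
  qed
  have "((\<lambda>x::real. (\<Sum>n<Suc k. x ^ n / fact n) + x ^ Suc k / fact (Suc k)) has_real_derivative
        ((\<Sum>n<k. x ^ n / fact n) + x ^ k / fact k)) (at x)"
    by (rule DERIV_add[OF Suc d])
  then show ?case by simp
qed

lemma G_deriv:
  "(G (Suc k) has_real_derivative (- exp (-x) * x ^ k / fact k)) (at x)"
proof -
  have "((\<lambda>x. exp (- x) * (\<Sum>n<Suc k. x ^ n / fact n)) has_real_derivative
      (- exp (-x) * (\<Sum>n<Suc k. x ^ n / fact n) + exp (-x) * (\<Sum>n<k. x ^ n / fact n))) (at x)"
  proof -
    have e: "((\<lambda>x::real. exp (-x)) has_real_derivative - exp (-x)) (at x)"
      by (auto intro!: derivative_eq_intros)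
    show ?thesis using DERIV_mult[OF e S_deriv[of k x]] by (simp add: algebra_simps)
  qed
  moreover have "- exp (-x) * (\<Sum>n<Suc k. x ^ n / fact n) + exp (-x) * (\<Sum>n<k. x ^ n / fact n)
      = - exp (-x) * x ^ k / fact k"
    by (simp add: algebra_simps)
  ultimately show ?thesis unfolding G_def[abs_def] by simp
qed

lemma G_strict:
  assumes "l \<ge> 1" "0 \<le> x" "x < y"
  shows "G l y < G l x"
proof -
  obtain k where l: "l = Suc k" using assms(1) by (cases l) auto
  show ?thesis unfolding l
  proof (rule DERIV_neg_imp_decreasing_open[OF assms(3)])
    fix t assume "x < t" "t < y"
    then have "t > 0" using assms by simp
    then show "\<exists>d. (G (Suc k) has_real_derivative d) (at t) \<and> d < 0"
    proof (intro exI conjI)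
      show "(G (Suc k) has_real_derivative (- exp (-t) * t ^ k / fact k)) (at t)" by (rule G_deriv)
      show "- exp (-t) * t ^ k / fact k < 0" using \<open>t > 0\<close> by (simp add: divide_neg_pos)
    qed
  next
    show "continuous_on {x..y} (G (Suc k))"
      using G_deriv by (meson DERIV_isCont continuous_at_imp_continuous_on)
  qed
qed

lemma G_cont: "continuous_on A (G l)"
  unfolding G_def[abs_def] by (intro continuous_intros) auto

theorem proposition1:
  fixes m Ks :: nat and tau :: real
  assumes "m \<ge> 2" and "Ks > m" and "tau > 1"
  shows "strict_mono_on {0..} (Pds m Ks tau)"
proof (rule strict_mono_onI)
  fix c1 c2 :: real
  assume c1: "c1 \<in> {0..}" and c2: "c2 \<in> {0..}" and lt: "c1 < c2"
  define L where "L = Ks - m + 1"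
  define g where "g c r = dens m Ks r * (1 - 1 / (r * tau) ^ L *
          (\<Sum>l=1..L. real (L choose l) * (r * tau - 1) ^ l * G l (c / tau)))" for c r
  have L1: "L \<ge> 1" unfolding L_def by simp
  have cont: "continuous_on {1/tau..1} (g c)" for c
  proof -
    have nz: "\<And>r. r\<in>{1/tau..1} \<Longrightarrow> (r * tau) ^ L \<noteq> 0"
    proof -
      fix r assume "r\<in>{1/tau..1}"
      moreover have "1/tau > 0" using assms(3) by simp
      ultimately have "r > 0" by (meson atLeastAtMost_iff less_le_trans)
      then show "(r * tau) ^ L \<noteq> 0" using assms(3) by simp
    qed
    have c1: "continuous_on {1/tau..1} (dens m Ks)" unfolding dens_def[abs_def]
      by (intro continuous_intros)
    have c2: "continuous_on {1/tau..1} (\<lambda>r. 1 / (r * tau) ^ L)"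
      by (rule continuous_on_divide) (use assms(3) in \<open>auto intro!: continuous_intros nz\<close>)
    have c3: "continuous_on {1/tau..1} (\<lambda>r. \<Sum>l=1..L. real (L choose l) * (r * tau - 1) ^ l * G l (c / tau))"
      by (intro continuous_intros)
    show ?thesis unfolding g_def
      by (intro continuous_on_mult c1 continuous_on_diff continuous_on_const c2 c3)
  qed
  have less: "g c1 r < g c2 r" if r: "r \<in> {1/tau<..<1}" for r
  proof -
    have "1/tau > 0" using assms(3) by simp
    then have r0: "r > 0" using r by (meson greaterThanLessThan_iff less_trans)
    have rt: "r * tau > 1" using r assms(3) by (simp add: divide_less_eq mult.commute)
    have dpos: "dens m Ks r > 0" unfolding dens_def using r0 r by simp
    have "(\<Sum>l=1..L. real (L choose l) * (r * tau - 1) ^ l * G l (c2 / tau))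
        < (\<Sum>l=1..L. real (L choose l) * (r * tau - 1) ^ l * G l (c1 / tau))"
    proof (rule sum_strict_mono)
      fix l assume l: "l \<in> {1..L}"
      have "G l (c2/tau) < G l (c1/tau)"
        using G_strict[of l "c1/tau" "c2/tau"] l c1 lt assms(3)
        by (auto simp: divide_strict_right_mono)
      moreover have "real (L choose l) * (r * tau - 1) ^ l > 0"
        using l rt by auto
      ultimately show "real (L choose l) * (r * tau - 1) ^ l * G l (c2 / tau)
          < real (L choose l) * (r * tau - 1) ^ l * G l (c1 / tau)"
        by (rule mult_strict_left_mono)
    qed (use L1 in auto)
    moreover have "1 / (r * tau) ^ L > 0" using rt by simp
    ultimately have "1 / (r * tau) ^ L * (\<Sum>l=1..L. real (L choose l) * (r * tau - 1) ^ l * G l (c2 / tau))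
        < 1 / (r * tau) ^ L * (\<Sum>l=1..L. real (L choose l) * (r * tau - 1) ^ l * G l (c1 / tau))"
      by (rule mult_strict_left_mono)
    then show ?thesis unfolding g_def using dpos by (intro mult_strict_left_mono) auto
  qed
  have "integral {1/tau..1} (g c1) < integral {1/tau..1} (g c2)"
    by (rule integral_less_real[OF cont cont]) (use assms(3) less in auto)
  then show "Pds m Ks tau c1 < Pds m Ks tau c2"
    unfolding Pds_def Let_def g_def L_def by simp
qed

end
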